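(* Let $S$ be a numerical semigroup with minimal generators $e<a_1<\dots<a_t$. For every $s\in S$, ${\rm d}_{\max}(s;S)$ equals the number of $B^{\mathcal D}$-factorizations of ${\rm adj}(s)$ of length at most ${\rm ord}(s;S)$.
   Context: A numerical semigroup is a submonoid of $(\mathbb N,+)$ with finite complement. An $S$-factorization of $n$ is $(c_0,\dots,c_t)\in\mathbb N^{t+1}$ with $c_0e+\sum c_ia_i=n$, of length $\sum c_i$. ${\rm ord}(n;S)$ is the maximal such length, and ${\rm d}_{\max}(n;S)$ is the number of $S$-factorizations of $n$ of length ${\rm ord}(n;S)$. Let $d_i=a_i-e$, $B=\langle e,d_1,\dots,d_t\rangle$, $\mathcal D=(e,d_1,\dots,d_t)$. A $B^{\mathcal D}$-factorization of $b$ is $(x_0,\dots,x_t)\in\mathbb N^{t+1}$ with $x_0e+\sum x_id_i=b$, of length $\sum x_i$. The adjustment is ${\rm adj}(s)=s-{\rm ord}(s;S)e$. *)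

theory Defs
  imports Main
begin

definition numerical_semigroup :: "nat set \<Rightarrow> bool" where
  "numerical_semigroup S \<longleftrightarrow> 0 \<in> S \<and> (\<forall>x\<in>S. \<forall>y\<in>S. x + y \<in> S) \<and> finite (UNIV - S)"

definition min_gens :: "nat set \<Rightarrow> nat set" where
  "min_gens S = {x \<in> S. x \<noteq> 0 \<and> \<not> (\<exists>y\<in>S. \<exists>z\<in>S. y \<noteq> 0 \<and> z \<noteq> 0 \<and> x = y + z)}"

definition facts :: "(nat \<Rightarrow> nat) \<Rightarrow> nat \<Rightarrow> nat \<Rightarrow> (nat \<Rightarrow> nat) set" where
  "facts g t n = {c. (\<forall>i>t. c i = 0) \<and> (\<Sum>i\<le>t. c i * g i) = n}"

definition flen :: "nat \<Rightarrow> (nat \<Rightarrow> nat) \<Rightarrow> nat" where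
  "flen t c = (\<Sum>i\<le>t. c i)"

definition Sgen :: "nat \<Rightarrow> (nat \<Rightarrow> nat) \<Rightarrow> nat \<Rightarrow> nat" where
  "Sgen e a i = (if i = 0 then e else a i)"

definition Dgen :: "nat \<Rightarrow> (nat \<Rightarrow> nat) \<Rightarrow> nat \<Rightarrow> nat" where
  "Dgen e a i = (if i = 0 then e else a i - e)"

definition ord_S :: "nat \<Rightarrow> (nat \<Rightarrow> nat) \<Rightarrow> nat \<Rightarrow> nat \<Rightarrow> nat" where
  "ord_S e a t n = Max (flen t ` facts (Sgen e a) t n)"

definition dmax :: "nat \<Rightarrow> (nat \<Rightarrow> nat) \<Rightarrow> nat \<Rightarrow> nat \<Rightarrow> nat" where
  "dmax e a t n = card {c \<in> facts (Sgen e a) t n. flen t c = ord_S e a t n}"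

definition adj :: "nat \<Rightarrow> (nat \<Rightarrow> nat) \<Rightarrow> nat \<Rightarrow> nat \<Rightarrow> nat" where
  "adj e a t s = s - ord_S e a t s * e"

end

theory Submission
  imports Defs
begin

lemma split0: "(\<Sum>i\<le>t. f i) = (f 0 :: nat) + (\<Sum>i\<in>{Suc 0..t}. f i)"
proof -
  have "{..t} = insert 0 {1..t}" by auto
  then show ?thesis by simp
qed

lemma gen_exists:
  assumes ns: "numerical_semigroup S"
    and mg: "min_gens S = insert e (a ` {1..t})"
    and "s \<in> S"
  shows "\<exists>c. (\<forall>i>t. c i = 0) \<and> (\<Sum>i\<le>t. c i * Sgen e a i) = s"
  using assms(3)
proof (induction s rule: less_induct)
  case (less s)
  show ?case
  proof (cases "s = 0")
    case True
    then show ?thesis by (intro exI[of _ "\<lambda>_. 0"]) simp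
  next
    case False
    show ?thesis
    proof (cases "s \<in> min_gens S")
      case True
      then obtain k where k: "k \<le> t" "Sgen e a k = s"
      proof -
        have "s = e \<or> s \<in> a ` {1..t}" using True mg by auto
        then show ?thesis
        proof
          assume "s = e" then show ?thesis using that[of 0] by (simp add: Sgen_def)
        next
          assume "s \<in> a ` {1..t}" then obtain k where "k \<in> {1..t}" "s = a k" by auto
          then show ?thesis using that[of k] by (simp add: Sgen_def)
        qed
      qed
      have "(\<Sum>i\<le>t. (if i = k then 1 else 0) * Sgen e a i) = s"
      proof -
        have "(\<Sum>i\<le>t. (if i = k then 1 else 0) * Sgen e a i) = (\<Sum>i\<le>t. if i = k then Sgen e a i else 0)"
          by (intro sum.cong) auto
        then show ?thesis using k by simp
      qed
      then show ?thesis using k by (intro exI[of _ "\<lambda>i. if i = k then 1 else 0"]) auto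
    next
      case nm: False
      then obtain y z where yz: "y \<in> S" "z \<in> S" "y \<noteq> 0" "z \<noteq> 0" "s = y + z"
        using False less.prems by (auto simp: min_gens_def)
      obtain c1 where c1: "\<forall>i>t. c1 i = 0" "(\<Sum>i\<le>t. c1 i * Sgen e a i) = y"
        using less.IH[of y] yz by auto
      obtain c2 where c2: "\<forall>i>t. c2 i = 0" "(\<Sum>i\<le>t. c2 i * Sgen e a i) = z"
        using less.IH[of z] yz by auto
      have "(\<Sum>i\<le>t. (c1 i + c2 i) * Sgen e a i) = s"
        using c1 c2 yz by (simp add: algebra_simps sum.distrib)
      then show ?thesis using c1 c2 by (intro exI[of _ "\<lambda>i. c1 i + c2 i"]) auto
    qed
  qed
qed

theorem proposition3p3:
  fixes S :: "nat set" and e t :: nat and a :: "nat \<Rightarrow> nat" and s :: nat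
  assumes "numerical_semigroup S"
    and "min_gens S = insert e (a ` {1..t})"
    and "t \<ge> 1 \<Longrightarrow> e < a 1"
    and "\<And>i j. 1 \<le> i \<Longrightarrow> i < j \<Longrightarrow> j \<le> t \<Longrightarrow> a i < a j"
    and "s \<in> S"
  shows "dmax e a t s =
         card {x \<in> facts (Dgen e a) t (adj e a t s). flen t x \<le> ord_S e a t s}"
proof -
  have e0: "e \<noteq> 0" using assms(2) unfolding min_gens_def by blast
  have ae: "e \<le> a i" if "1 \<le> i" "i \<le> t" for i
  proof (cases "i = 1")
    case True then show ?thesis using assms(3) that by simp
  next
    case False then show ?thesis using assms(3)[of] assms(4)[of 1 i] that by simp
  qed
  have ge: "e \<le> Sgen e a i" if "i \<le> t" for i
    using ae[of i] that by (auto simp: Sgen_def)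
  define F where "F = facts (Sgen e a) t s"
  define N where "N = ord_S e a t s"
  have Fne: "F \<noteq> {}" using gen_exists[OF assms(1,2,5)] by (auto simp: F_def facts_def)
  have lenle: "flen t c * e \<le> s" if "c \<in> F" for c
  proof -
    have "flen t c * e = (\<Sum>i\<le>t. c i * e)" by (simp add: flen_def sum_distrib_right)
    also have "\<dots> \<le> (\<Sum>i\<le>t. c i * Sgen e a i)" by (intro sum_mono) (simp add: ge)
    finally show ?thesis using that by (simp add: F_def facts_def)
  qed
  have "flen t ` F \<subseteq> {..s}"
  proof
    fix n assume "n \<in> flen t ` F"
    then obtain c where "c \<in> F" "n = flen t c" by auto
    then have "n * e \<le> s" using lenle by auto
    moreover have "n \<le> n * e" using e0 by simp
    ultimately show "n \<in> {..s}" by (meson atMost_iff le_trans)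
  qed
  then have fin: "finite (flen t ` F)" by (rule finite_subset) simp
  have Nmax: "flen t c \<le> N" if "c \<in> F" for c
    unfolding N_def ord_S_def F_def[symmetric] using fin that by simp
  have "N \<in> flen t ` F" unfolding N_def ord_S_def F_def[symmetric]
    using fin Fne by (intro Max_in) auto
  then have Ne: "N * e \<le> s" using lenle by auto
  define A where "A = {c \<in> F. flen t c = N}"
  define B where "B = {x \<in> facts (Dgen e a) t (s - N * e). flen t x \<le> N}"
  have ident: "(\<Sum>i\<le>t. c i * Sgen e a i) = (c 0 + (\<Sum>i\<in>{1..t}. c i)) * e + (\<Sum>i\<in>{1..t}. c i * Dgen e a i)" for c
  proof -
    have "(\<Sum>i\<in>{1..t}. c i * Sgen e a i) = (\<Sum>i\<in>{1..t}. c i * e + c i * Dgen e a i)"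
      by (intro sum.cong refl) (auto simp: Sgen_def Dgen_def ae algebra_simps)
    moreover have "(\<Sum>i\<in>{1..t}. c i * e) = (\<Sum>i\<in>{1..t}. c i) * e" by (simp add: sum_distrib_right)
    ultimately show ?thesis by (simp add: split0[of _ t] sum.distrib algebra_simps Sgen_def)
  qed
  have x0: "x 0 = 0" if "x \<in> B" for x
  proof -
    let ?X = "\<Sum>i\<in>{1..t}. x i"
    have xt: "\<forall>i>t. x i = 0" and xs: "(\<Sum>i\<le>t. x i * Dgen e a i) = s - N * e"
      and xl: "flen t x \<le> N" using that by (auto simp: B_def facts_def)
    have xl': "x 0 + ?X \<le> N" using xl by (simp add: flen_def split0[of _ t])
    define c where "c = x(0 := N + x 0 - ?X)"
    have cX: "(\<Sum>i\<in>{1..t}. c i) = ?X" "(\<Sum>i\<in>{1..t}. c i * Dgen e a i) = (\<Sum>i\<in>{1..t}. x i * Dgen e a i)"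
      by (auto simp: c_def intro!: sum.cong)
    have "(\<Sum>i\<le>t. c i * Sgen e a i) = (N + x 0) * e + (\<Sum>i\<in>{1..t}. x i * Dgen e a i)"
      unfolding ident cX using xl' by (simp add: c_def)
    also have "\<dots> = s" using xs Ne by (simp add: split0[of _ t] Dgen_def algebra_simps)
    finally have "c \<in> F" using xt by (auto simp: F_def facts_def c_def)
    then have "flen t c \<le> N" by (rule Nmax)
    moreover have "flen t c = N + x 0" using xl' cX by (simp add: flen_def split0[of _ t] c_def)
    ultimately show ?thesis by simp
  qed
  have bij: "bij_betw (\<lambda>c. c(0 := 0)) A B"
  proof (rule bij_betw_byWitness[where f' = "\<lambda>x. x(0 := N - (\<Sum>i\<in>{1..t}. x i))"])
    show "\<forall>c\<in>A. (c(0 := 0))(0 := N - (\<Sum>i\<in>{1..t}. (c(0:=0)) i)) = c"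
    proof
      fix c assume "c \<in> A"
      then have "flen t c = N" by (simp add: A_def)
      then have "c 0 = N - (\<Sum>i\<in>{1..t}. c i)" by (simp add: flen_def split0[of _ t])
      moreover have "(\<Sum>i\<in>{1..t}. (c(0:=0)) i) = (\<Sum>i\<in>{1..t}. c i)" by (auto intro!: sum.cong)
      ultimately show "(c(0 := 0))(0 := N - (\<Sum>i\<in>{1..t}. (c(0:=0)) i)) = c" by auto
    qed
    show "\<forall>x\<in>B. (x(0 := N - (\<Sum>i\<in>{1..t}. x i)))(0 := 0) = x"
      using x0 by auto
    show "(\<lambda>c. c(0 := 0)) ` A \<subseteq> B"
    proof
      fix y assume "y \<in> (\<lambda>c. c(0 := 0)) ` A"
      then obtain c where c: "c \<in> A" "y = c(0 := 0)" by auto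
      have ct: "\<forall>i>t. c i = 0" and cs: "(\<Sum>i\<le>t. c i * Sgen e a i) = s" and cl: "flen t c = N"
        using c by (auto simp: A_def F_def facts_def)
      have cl': "c 0 + (\<Sum>i\<in>{1..t}. c i) = N" using cl by (simp add: flen_def split0[of _ t])
      have yX: "(\<Sum>i\<in>{1..t}. y i) = (\<Sum>i\<in>{1..t}. c i)" "(\<Sum>i\<in>{1..t}. y i * Dgen e a i) = (\<Sum>i\<in>{1..t}. c i * Dgen e a i)"
        using c by (auto intro!: sum.cong)
      have "s = N * e + (\<Sum>i\<in>{1..t}. c i * Dgen e a i)" using cs ident[of c] cl' by simp
      then have "(\<Sum>i\<le>t. y i * Dgen e a i) = s - N * e"
        using yX c by (simp add: split0[of _ t])
      moreover have "flen t y \<le> N" using yX c cl' by (simp add: flen_def split0[of _ t])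
      ultimately show "y \<in> B" using ct c by (auto simp: B_def facts_def)
    qed
    show "(\<lambda>x. x(0 := N - (\<Sum>i\<in>{1..t}. x i))) ` B \<subseteq> A"
    proof
      fix y assume "y \<in> (\<lambda>x. x(0 := N - (\<Sum>i\<in>{1..t}. x i))) ` B"
      then obtain x where x: "x \<in> B" "y = x(0 := N - (\<Sum>i\<in>{1..t}. x i))" by auto
      have x00: "x 0 = 0" using x0 x by simp
      have xt: "\<forall>i>t. x i = 0" and xs: "(\<Sum>i\<le>t. x i * Dgen e a i) = s - N * e"
        and xl: "flen t x \<le> N" using x by (auto simp: B_def facts_def)
      have xl': "(\<Sum>i\<in>{1..t}. x i) \<le> N" using xl x00 by (simp add: flen_def split0[of _ t])
      have yX: "(\<Sum>i\<in>{1..t}. y i) = (\<Sum>i\<in>{1..t}. x i)" "(\<Sum>i\<in>{1..t}. y i * Dgen e a i) = (\<Sum>i\<in>{1..t}. x i * Dgen e a i)"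
        using x by (auto intro!: sum.cong)
      have y0: "y 0 + (\<Sum>i\<in>{1..t}. y i) = N" using yX xl' x by simp
      have "(\<Sum>i\<le>t. y i * Sgen e a i) = N * e + (\<Sum>i\<in>{1..t}. x i * Dgen e a i)"
        unfolding ident y0 yX(2) ..
      also have "\<dots> = s" using xs Ne x00 by (simp add: split0[of _ t])
      finally have "y \<in> F" using xt x by (auto simp: F_def facts_def)
      moreover have "flen t y = N" using y0 by (simp add: flen_def split0[of _ t])
      ultimately show "y \<in> A" by (simp add: A_def)
    qed
  qed
  have "dmax e a t s = card A" by (simp add: dmax_def A_def F_def N_def)
  also have "\<dots> = card B" using bij by (rule bij_betw_same_card)
  also have "\<dots> = card {x \<in> facts (Dgen e a) t (adj e a t s). flen t x \<le> ord_S e a t s}"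
    by (simp add: B_def adj_def N_def)
  finally show ?thesis .
qed

end
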